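(* Let $S \subseteq \mathbb{R}^r$ be a linear subspace, $0 \le d \le r$, and $C(S,d)$ the associated s-cone. Let $x, x' \in C(S,d)$ be nonzero vectors which are not proportional. If $\operatorname{supp}(x') \subseteq \operatorname{supp}(x)$, then there exists a nonzero vector $x'' = x - \lambda x' \in C(S,d)$ with $\lambda \in \mathbb{R}$ such that $\operatorname{sign}(x'') \le \operatorname{sign}(x)$ and $\operatorname{supp}(x'') \subsetneq \operatorname{supp}(x)$. If moreover $\operatorname{sign}(x') \le \operatorname{sign}(x)$, then $\lambda > 0$ can be taken.
   Context: For $x \in \mathbb{R}^n$, $\operatorname{supp}(x) = \{ i \mid x_i \neq 0\}$, and $\operatorname{sign}(x) \in \{-,0,+\}^n$ is obtained by applying the sign function componentwise. The relations $0 < -$ and $0 < +$ induce a componentwise partial order on $\{-,0,+\}^n$ ($-$ and $+$ incomparable). For a linear subspace $S \subseteq \mathbb{R}^r$ and $0 \le d \le r$, the s-cone is $C(S,d) = \{ (x,y) \in \mathbb{R}^{(r-d)+d} \mid (x,y) \in S,\ y \ge 0\}$. *)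

theory Defs
  imports "HOL-Analysis.Analysis"
begin

text \<open>Vectors of R^r are represented as functions nat => real vanishing outside {0..<r};
  coordinate i (0-based) corresponds to coordinate i+1 of the paper.\<close>

definition vecs :: "nat \<Rightarrow> (nat \<Rightarrow> real) set" where
  "vecs r = {x. \<forall>i\<ge>r. x i = 0}"

definition supp :: "(nat \<Rightarrow> real) \<Rightarrow> nat set" where
  "supp x = {i. x i \<noteq> 0}"

text \<open>Sign vectors: sign values are encoded as reals -1, 0, 1 (via sgn).
  The order 0 < -, 0 < + (with - and + incomparable), componentwise.\<close>

definition sign_le :: "real \<Rightarrow> real \<Rightarrow> bool" where
  "sign_le a b \<longleftrightarrow> a = b \<or> a = 0"

definition sign_vec_le :: "(nat \<Rightarrow> real) \<Rightarrow> (nat \<Rightarrow> real) \<Rightarrow> bool" where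
  "sign_vec_le x y \<longleftrightarrow> (\<forall>i. sign_le (sgn (x i)) (sgn (y i)))"

definition lin_subspace :: "nat \<Rightarrow> (nat \<Rightarrow> real) set \<Rightarrow> bool" where
  "lin_subspace r S \<longleftrightarrow> S \<subseteq> vecs r \<and> (\<lambda>i. 0) \<in> S
     \<and> (\<forall>u\<in>S. \<forall>v\<in>S. (\<lambda>i. u i + v i) \<in> S)
     \<and> (\<forall>c::real. \<forall>u\<in>S. (\<lambda>i. c * u i) \<in> S)"

definition s_cone :: "nat \<Rightarrow> (nat \<Rightarrow> real) set \<Rightarrow> nat \<Rightarrow> (nat \<Rightarrow> real) set" where
  "s_cone r S d = {z. z \<in> S \<and> (\<forall>i. r - d \<le> i \<and> i < r \<longrightarrow> z i \<ge> 0)}"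

end

theory Submission
  imports Defs
begin

theorem lemma1:
  fixes r d :: nat and S :: "(nat \<Rightarrow> real) set" and x x' :: "nat \<Rightarrow> real"
  assumes "lin_subspace r S" and "d \<le> r"
    and "x \<in> s_cone r S d" and "x' \<in> s_cone r S d"
    and "x \<noteq> (\<lambda>i. 0)" and "x' \<noteq> (\<lambda>i. 0)"
    and "\<not> (\<exists>c::real. x' = (\<lambda>i. c * x i))"
    and "supp x' \<subseteq> supp x"
  shows "\<exists>l::real. let x'' = (\<lambda>i. x i - l * x' i) in
            x'' \<noteq> (\<lambda>i. 0) \<and> x'' \<in> s_cone r S d
            \<and> sign_vec_le x'' x \<and> supp x'' \<subset> supp x
            \<and> (sign_vec_le x' x \<longrightarrow> l > 0)"
proof -
  note L = assms(1)[unfolded lin_subspace_def]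
  have xS: "x \<in> S" and x'S: "x' \<in> S" using assms(3,4) by (auto simp: s_cone_def)
  have fin: "finite (supp x)"
  proof -
    have "x \<in> vecs r" using xS L by blast
    then have "supp x \<subseteq> {..<r}" unfolding supp_def vecs_def using not_less by blast
    then show ?thesis by (rule finite_subset) simp
  qed
  obtain k where k: "x' k \<noteq> 0" using assms(6) by auto
  have ksupp: "k \<in> supp x" using k assms(8) by (auto simp: supp_def)
  define t where "t i = x' i / x i" for i
  define M where "M = Max ((\<lambda>i. \<bar>t i\<bar>) ` supp x)"
  have "M \<in> (\<lambda>i. \<bar>t i\<bar>) ` supp x" unfolding M_def using fin ksupp by (intro Max_in) auto
  then obtain j where j: "j \<in> supp x" "\<bar>t j\<bar> = M" by auto
  have Mge: "\<bar>t i\<bar> \<le> \<bar>t j\<bar>" if "i \<in> supp x" for i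
    using j fin that unfolding M_def by auto
  have xj: "x j \<noteq> 0" using j by (simp add: supp_def)
  have tk: "t k \<noteq> 0" using k ksupp by (simp add: t_def supp_def)
  have tj: "t j \<noteq> 0" using Mge[OF ksupp] tk by auto
  define l where "l = 1 / t j"
  define x'' where "x'' = (\<lambda>i. x i - l * x' i)"
  have zero_out: "x'' i = 0" if "x i = 0" for i
  proof -
    have "x' i = 0" using that assms(8) by (auto simp: supp_def)
    then show ?thesis using that by (simp add: x''_def)
  qed
  have form: "x'' i = x i * (1 - l * t i)" if "x i \<noteq> 0" for i
    using that by (simp add: x''_def t_def field_simps)
  have nonneg: "1 - l * t i \<ge> 0" if "x i \<noteq> 0" for i
  proof -
    have "l * t i = t i / t j" by (simp add: l_def)
    also have "\<dots> \<le> \<bar>t i / t j\<bar>" by (rule abs_ge_self)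
    also have "\<dots> = \<bar>t i\<bar> / \<bar>t j\<bar>" by (rule abs_divide)
    also have "\<dots> \<le> 1" using Mge[of i] that tj by (simp add: supp_def divide_le_eq_1)
    finally show ?thesis by simp
  qed
  have signle: "sign_le (sgn (x'' i)) (sgn (x i))" for i
  proof (cases "x i = 0")
    case True then show ?thesis using zero_out by (simp add: sign_le_def)
  next
    case False
    show ?thesis
    proof (cases "1 - l * t i = 0")
      case True then show ?thesis using form[OF False] by (simp add: sign_le_def)
    next
      case F2: False
      then have "1 - l * t i > 0" using nonneg[OF False] by simp
      then show ?thesis using form[OF False] by (simp add: sign_le_def sgn_mult)
    qed
  qed
  have x''j: "x'' j = 0" using form[OF xj] tj by (simp add: l_def)
  have suppsub: "supp x'' \<subset> supp x"
  proof -
    have "supp x'' \<subseteq> supp x" using zero_out by (auto simp: supp_def)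
    moreover have "j \<notin> supp x''" using x''j by (simp add: supp_def)
    ultimately show ?thesis using j by auto
  qed
  have nz: "x'' \<noteq> (\<lambda>i. 0)"
  proof
    assume h: "x'' = (\<lambda>i. 0)"
    then have "\<And>i. x i = l * x' i" unfolding x''_def by (metis eq_iff_diff_eq_0)
    then have "\<And>i. x' i = t j * x i" using tj by (simp add: l_def field_simps)
    then show False using assms(7) by auto
  qed
  have inS: "x'' \<in> S"
  proof -
    have "(\<lambda>i. (-l) * x' i) \<in> S" using conjunct2[OF conjunct2[OF conjunct2[OF L]]] x'S by blast
    then have "(\<lambda>i. x i + (-l) * x' i) \<in> S" using conjunct1[OF conjunct2[OF conjunct2[OF L]]] xS
      by (metis (no_types))
    then show ?thesis by (simp add: x''_def)
  qed
  have cone: "x'' \<in> s_cone r S d"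
  proof -
    have "x'' i \<ge> 0" if "r - d \<le> i" "i < r" for i
    proof -
      have "x i \<ge> 0" using assms(3) that by (auto simp: s_cone_def)
      then show ?thesis using signle[of i]
        by (cases "x'' i > 0"; cases "x'' i < 0") (auto simp: sign_le_def sgn_if split: if_splits)
    qed
    then show ?thesis using inS by (simp add: s_cone_def)
  qed
  have pos: "l > 0" if "sign_vec_le x' x"
  proof -
    have "sign_le (sgn (x' j)) (sgn (x j))" using that by (simp add: sign_vec_le_def)
    moreover have "x' j \<noteq> 0" using tj by (simp add: t_def)
    ultimately have "sgn (x' j) = sgn (x j)" by (auto simp: sign_le_def sgn_0_0)
    then have "t j > 0" using xj unfolding t_def
      by (cases "x j > 0"; cases "x' j > 0") (auto simp: sgn_if divide_neg_neg split: if_splits)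
    then show ?thesis by (simp add: l_def)
  qed
  show ?thesis
    apply (rule exI[of _ l])
    using nz cone signle suppsub pos unfolding x''_def Let_def sign_vec_le_def by auto
qed

end
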